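(* Let $n$ range over odd square-free integers greater than $1$, let $r$ be real, and let $V$ be drawn uniformly at random from $\mathcal{V}_n$. Then, as $n\to\infty$, \[ \Pr\Big(\|V_r\|_4^4<288\,[\psi(n)]^2\log n\Big)\to 1, \] where $\psi(n)=n-\phi(n)$.
   Context: $\phi$ is Euler's totient function. For $A\in\mathbb{C}[z]$, $\|A\|_4=\left(\frac{1}{2\pi}\int_0^{2\pi}|A(e^{i\theta})|^4 d\theta\right)^{1/4}$. For a polynomial $A$ of degree at most $n-1$ and real $r$, the rotation is $A_r(z)=z^{-\lfloor nr\rfloor}A(z)\bmod (z^n-1)$. $\mathcal{V}_n$ is the set of polynomials $\sum_{j=0}^{n-1}v_jz^j$ with $v_j\in\{0,-1,+1\}$ and $v_j=0$ if and only if $\gcd(j,n)=1$. *)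

theory Defs
  imports "HOL-Analysis.Analysis" "HOL-Computational_Algebra.Polynomial"
    "HOL-Computational_Algebra.Squarefree" "HOL-Number_Theory.Totient"
begin

definition L4_pow4 :: "complex poly \<Rightarrow> real" where
  "L4_pow4 A = (1 / (2 * pi)) * integral {0..2*pi} (\<lambda>\<theta>. (cmod (poly A (cis \<theta>))) ^ 4)"

text \<open>Rotation A_r(z) = z^{-floor(n r)} A(z) mod (z^n - 1). Since z^n = 1 modulo z^n - 1,
  z^{-k} is represented by z^{(-k) mod n}.\<close>
definition rotation :: "nat \<Rightarrow> real \<Rightarrow> complex poly \<Rightarrow> complex poly" where
  "rotation n r A = (monom 1 (nat ((- \<lfloor>real n * r\<rfloor>) mod int n)) * A) mod (monom 1 n - 1)"

definition Vset :: "nat \<Rightarrow> complex poly set" where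
  "Vset n = {(\<Sum>j<n. monom (of_int (v j)) j) | v :: nat \<Rightarrow> int.
              \<forall>j<n. v j \<in> {0, -1, 1} \<and> (v j = 0 \<longleftrightarrow> coprime j n)}"

definition psi :: "nat \<Rightarrow> nat" where
  "psi n = n - totient n"

definition prob_V :: "nat \<Rightarrow> (complex poly \<Rightarrow> bool) \<Rightarrow> real" where
  "prob_V n P = real (card {V \<in> Vset n. P V}) / real (card (Vset n))"

end

theory Submission
  imports Defs
begin


definition Fset :: "nat set \<Rightarrow> (nat \<Rightarrow> int) set" where
  "Fset S = {v. (\<forall>j\<in>S. v j \<in> {-1,1}) \<and> (\<forall>j. j \<notin> S \<longrightarrow> v j = 0)}"

lemma Fset_empty: "Fset {} = {\<lambda>_. 0}"
  by (auto simp: Fset_def)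

lemma Fset_insert:
  assumes "a \<notin> S"
  shows "Fset (insert a S) = (\<lambda>(b,v). v(a:=b)) ` ({-1,1} \<times> Fset S)"
    and "inj_on (\<lambda>(b,v). v(a:=b)) ({-1,1} \<times> Fset S)"
proof -
  show "Fset (insert a S) = (\<lambda>(b,v). v(a:=b)) ` ({-1,1} \<times> Fset S)"
  proof
    show "Fset (insert a S) \<subseteq> (\<lambda>(b,v). v(a:=b)) ` ({-1,1} \<times> Fset S)"
    proof
      fix u assume u: "u \<in> Fset (insert a S)"
      have "u = (\<lambda>(b,v). v(a:=b)) (u a, u(a:=0))" by auto
      moreover have "(u a, u(a:=0)) \<in> {-1,1} \<times> Fset S"
        using u assms unfolding Fset_def by force
      ultimately show "u \<in> (\<lambda>(b,v). v(a:=b)) ` ({-1,1} \<times> Fset S)" by blast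
    qed
  next
    show "(\<lambda>(b,v). v(a:=b)) ` ({-1,1} \<times> Fset S) \<subseteq> Fset (insert a S)"
    proof (rule subsetI, clarify)
      fix b :: int and v assume hb: "b \<in> {-1,1}" and hv: "v \<in> Fset S"
      show "v(a := b) \<in> Fset (insert a S)"
        unfolding Fset_def
      proof (intro CollectI conjI allI ballI impI)
        fix j assume "j \<in> insert a S" then show "(v(a := b)) j \<in> {-1,1}"
          using hb hv unfolding Fset_def by (cases "j = a") auto
      next
        fix j assume "j \<notin> insert a S" then show "(v(a := b)) j = 0"
          using hv unfolding Fset_def by auto
      qed
    qed
  qed
  show "inj_on (\<lambda>(b,v). v(a:=b)) ({-1,1} \<times> Fset S)"
  proof (rule inj_onI, clarify)
    fix b v b' v'
    assume h: "v \<in> Fset S" "v' \<in> Fset S" "v(a := b) = v'(a := b')"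
    have "b = b'" using fun_cong[OF h(3), of a] by simp
    moreover have "v = v'"
    proof
      fix j show "v j = v' j"
        using fun_cong[OF h(3), of j] h(1,2) assms by (cases "j = a") (auto simp: Fset_def)
    qed
    ultimately show "b = b' \<and> v = v'" by simp
  qed
qed

lemma Fset_sum_insert:
  assumes "a \<notin> S" "finite (Fset S)"
  shows "sum g (Fset (insert a S)) = (\<Sum>v\<in>Fset S. g (v(a:=1)) + g (v(a:=-1)))"
proof -
  have "sum g (Fset (insert a S)) = sum (g \<circ> (\<lambda>(b,v). v(a:=b))) ({-1,1} \<times> Fset S)"
    using Fset_insert[OF assms(1)] by (simp add: sum.reindex)
  also have "\<dots> = (\<Sum>b\<in>{-1,1::int}. \<Sum>v\<in>Fset S. g (v(a:=b)))"
    by (simp add: sum.cartesian_product case_prod_beta comp_def)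
  also have "\<dots> = (\<Sum>v\<in>Fset S. g (v(a:=1)) + g (v(a:=-1)))"
    by (simp add: sum.distrib add.commute)
  finally show ?thesis .
qed

lemma Fset_finite_card:
  assumes "finite S"
  shows "finite (Fset S) \<and> card (Fset S) = 2 ^ card S"
  using assms
proof (induction S rule: finite_induct)
  case empty then show ?case by (simp add: Fset_empty)
next
  case (insert a S)
  have "card ({-1,1::int} \<times> Fset S) = 2 * 2 ^ card S"
    using insert by (simp add: card_cartesian_product)
  then show ?case using Fset_insert[OF insert(2)] insert
    by (simp add: card_image)
qed

lemma quad_ineq:
  fixes Y w :: complex
  assumes "cmod w \<le> 1"
  shows "cmod (Y + w) ^ 2 + cmod (Y - w) ^ 2 \<le> 2 * (cmod Y ^ 2 + 1)"
    and "cmod (Y + w) ^ 4 + cmod (Y - w) ^ 4 \<le> 2 * cmod Y ^ 4 + 12 * cmod Y ^ 2 + 2"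
proof -
  obtain a b where Y: "Y = Complex a b" by (cases Y)
  obtain c d where w: "w = Complex c d" by (cases w)
  have cd: "c^2 + d^2 \<le> 1"
    using assms w by (simp add: cmod_def)
  have p: "cmod (Y + w) ^ 2 = (a+c)^2 + (b+d)^2" and q: "cmod (Y - w) ^ 2 = (a-c)^2 + (b-d)^2"
    and y: "cmod Y ^ 2 = a^2 + b^2"
    by (simp_all add: Y w cmod_power2)
  show "cmod (Y + w) ^ 2 + cmod (Y - w) ^ 2 \<le> 2 * (cmod Y ^ 2 + 1)"
    unfolding p q y using cd by (simp add: power2_eq_square algebra_simps)
  have e4: "cmod (Y + w) ^ 4 + cmod (Y - w) ^ 4
      = 2 * (a^2+b^2+c^2+d^2)^2 + 8 * (a*c+b*d)^2"
  proof -
    have "cmod (Y + w) ^ 4 + cmod (Y - w) ^ 4 = (cmod (Y + w) ^ 2)^2 + (cmod (Y - w) ^ 2)^2"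
      by simp
    also have "\<dots> = ((a+c)^2 + (b+d)^2)^2 + ((a-c)^2 + (b-d)^2)^2" by (simp only: p q)
    also have "\<dots> = 2 * (a^2+b^2+c^2+d^2)^2 + 8 * (a*c+b*d)^2"
      by (simp add: power2_eq_square algebra_simps)
    finally show ?thesis .
  qed
  have cs: "(a*c+b*d)^2 \<le> (a^2+b^2) * (c^2+d^2)"
  proof -
    have "(a^2+b^2) * (c^2+d^2) - (a*c+b*d)^2 = (a*d - b*c)^2" by (simp add: power2_eq_square algebra_simps)
    then show ?thesis by (metis diff_ge_0_iff_ge zero_le_power2)
  qed
  have A0: "0 \<le> a^2+b^2" by simp
  have "(a^2+b^2+c^2+d^2)^2 \<le> (a^2+b^2+1)^2"
    using cd A0 by (intro power_mono) auto
  moreover have "(a^2+b^2) * (c^2+d^2) \<le> (a^2+b^2)" using cd A0 mult_left_le by blast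
  ultimately show "cmod (Y + w) ^ 4 + cmod (Y - w) ^ 4 \<le> 2 * cmod Y ^ 4 + 12 * cmod Y ^ 2 + 2"
    unfolding e4 using cs y
    by (simp add: power2_eq_square power4_eq_xxxx algebra_simps) 
qed

lemma moments:
  fixes w :: "nat \<Rightarrow> complex"
  assumes "finite S" "\<And>j. cmod (w j) \<le> 1"
  shows "(\<Sum>v\<in>Fset S. cmod (\<Sum>j\<in>S. of_int (v j) * w j) ^ 2) \<le> real (card S) * card (Fset S)
    \<and> (\<Sum>v\<in>Fset S. cmod (\<Sum>j\<in>S. of_int (v j) * w j) ^ 4) \<le> 3 * real (card S)^2 * card (Fset S)"
  using assms(1)
proof (induction S rule: finite_induct)
  case empty then show ?case by (simp add: Fset_empty)
next
  case (insert a S)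
  define Y where "Y v = (\<Sum>j\<in>S. of_int (v j) * w j)" for v :: "nat \<Rightarrow> int"
  define K where "K = real (card (Fset S))"
  define m where "m = real (card S)"
  have fin: "finite (Fset S)" using Fset_finite_card[OF insert(1)] by simp
  have cardI: "real (card (Fset (insert a S))) = 2 * K"
    using Fset_finite_card[OF insert(1)] Fset_finite_card[of "insert a S"] insert(1,2) K_def by simp
  have mI: "real (card (insert a S)) = m + 1" using insert m_def by simp
  have split: "(\<Sum>j\<in>insert a S. of_int ((v(a:=b)) j) * w j) = of_int b * w a + Y v" for v b
  proof -
    have "(\<Sum>j\<in>S. of_int ((v(a:=b)) j) * w j) = Y v"
      unfolding Y_def using insert(2) by (intro sum.cong) auto
    then show ?thesis using insert(1,2) by simp
  qed
  have IH2: "(\<Sum>v\<in>Fset S. cmod (Y v) ^ 2) \<le> m * K"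
    and IH4: "(\<Sum>v\<in>Fset S. cmod (Y v) ^ 4) \<le> 3 * m^2 * K"
    using insert(3) unfolding Y_def m_def K_def by auto
  have "(\<Sum>v\<in>Fset (insert a S). cmod (\<Sum>j\<in>insert a S. of_int (v j) * w j) ^ 2)
      = (\<Sum>v\<in>Fset S. cmod (Y v + w a) ^ 2 + cmod (Y v - w a) ^ 2)"
    by (subst Fset_sum_insert[OF insert(2) fin]) (simp only: split, simp add: algebra_simps)
  also have "\<dots> \<le> (\<Sum>v\<in>Fset S. 2 * (cmod (Y v) ^ 2 + 1))"
    by (intro sum_mono quad_ineq(1) assms(2))
  also have "\<dots> = 2 * (\<Sum>v\<in>Fset S. cmod (Y v) ^ 2) + 2 * K"
    by (simp add: sum.distrib sum_distrib_left K_def)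
  also have "\<dots> \<le> real (card (insert a S)) * real (card (Fset (insert a S)))"
    using IH2 mI cardI by (simp add: algebra_simps)
  finally have R2: "(\<Sum>v\<in>Fset (insert a S). cmod (\<Sum>j\<in>insert a S. of_int (v j) * w j) ^ 2)
     \<le> real (card (insert a S)) * real (card (Fset (insert a S)))" .
  have "(\<Sum>v\<in>Fset (insert a S). cmod (\<Sum>j\<in>insert a S. of_int (v j) * w j) ^ 4)
      = (\<Sum>v\<in>Fset S. cmod (Y v + w a) ^ 4 + cmod (Y v - w a) ^ 4)"
    by (subst Fset_sum_insert[OF insert(2) fin]) (simp only: split, simp add: algebra_simps)
  also have "\<dots> \<le> (\<Sum>v\<in>Fset S. 2 * cmod (Y v) ^ 4 + 12 * cmod (Y v) ^ 2 + 2)"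
    by (intro sum_mono quad_ineq(2) assms(2))
  also have "\<dots> = 2 * (\<Sum>v\<in>Fset S. cmod (Y v) ^ 4) + 12 * (\<Sum>v\<in>Fset S. cmod (Y v) ^ 2) + 2 * K"
    by (simp add: sum.distrib sum_distrib_left K_def)
  also have "\<dots> \<le> 2 * (3 * m^2 * K) + 12 * (m * K) + 2 * K"
    using IH2 IH4 by linarith
  also have "\<dots> \<le> 3 * real (card (insert a S))^2 * real (card (Fset (insert a S)))"
  proof -
    have "0 \<le> K" by (simp add: K_def)
    then have "0 \<le> 4 * K" by simp
    then show ?thesis unfolding mI cardI by (simp add: power2_eq_square algebra_simps)
  qed
  finally show ?case using R2 by simp
qed



lemma dvd_pow_minus_one: "(x - 1) dvd (x ^ q - (1::'a::comm_ring_1))"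
proof (induction q)
  case 0 then show ?case by simp
next
  case (Suc q)
  have eq: "x ^ Suc q - 1 = x * (x ^ q - 1) + (x - 1)" by (simp add: algebra_simps)
  show ?case by (subst eq) (intro dvd_add dvd_mult Suc dvd_refl)
qed

lemma degree_xn1: "n \<ge> 1 \<Longrightarrow> degree (monom (1::complex) n - 1) = n"
  by (smt (verit, ccfv_threshold) Orderings.order_eq_iff coeff_diff
    coeff_monom degree_1 degree_diff_le degree_monom_le diff_0_right
    diff_monom diff_self le_degree le_zero_eq monom_eq_1_iff)

lemma mod_sum_poly: "(\<Sum>i\<in>A. f i) mod (d :: complex poly) = (\<Sum>i\<in>A. f i mod d)"
  by (induction A rule: infinite_finite_induct) (auto simp: poly_mod_add_left)

lemma monom_mod:
  assumes "n \<ge> 1"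
  shows "monom (c::complex) m mod (monom 1 n - 1) = monom c (m mod n)"
proof -
  define d where "d = (monom (1::complex) n - 1)"
  define r where "r = monom (1::complex) (m mod n)"
  have m: "monom (1::complex) m = r * (monom 1 n) ^ (m div n)"
    unfolding r_def by (simp add: monom_power mult_monom)
  have "d dvd monom 1 m - r"
  proof -
    have "monom 1 m - r = r * ((monom 1 n) ^ (m div n) - 1)" by (simp add: m algebra_simps)
    then show ?thesis unfolding d_def by (metis dvd_mult dvd_pow_minus_one)
  qed
  then have z: "(monom 1 m - r) mod d = 0" by simp
  have dr: "degree r < degree d" unfolding d_def r_def using assms
    by (simp add: degree_xn1 degree_monom_eq)
  have "monom 1 m mod d = (monom 1 m - r) mod d + r mod d"
    by (metis diff_add_cancel poly_mod_add_left)
  also have "\<dots> = r" using z mod_poly_less[OF dr] by simp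
  finally have "monom 1 m mod d = r" .
  then have "smult c (monom 1 m) mod d = smult c r" by (simp add: mod_smult_left)
  then show ?thesis unfolding d_def r_def by (simp add: smult_monom)
qed

definition Pm :: "nat \<Rightarrow> (nat \<Rightarrow> int) \<Rightarrow> complex poly" where
  "Pm n v = (\<Sum>j<n. monom (of_int (v j)) j)"

definition Sn :: "nat \<Rightarrow> nat set" where
  "Sn n = {j. j < n \<and> \<not> coprime j n}"

lemma Sn_sub: "Sn n \<subseteq> {..<n}" "finite (Sn n)" by (auto simp: Sn_def)

lemma poly_rotation:
  assumes "n \<ge> 1" "v \<in> Fset (Sn n)"
  shows "poly (rotation n r (Pm n v)) z =
     (\<Sum>j\<in>Sn n. of_int (v j) * z ^ ((nat ((- \<lfloor>real n * r\<rfloor>) mod int n) + j) mod n))"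
proof -
  define k where "k = nat ((- \<lfloor>real n * r\<rfloor>) mod int n)"
  have "rotation n r (Pm n v) = (\<Sum>j<n. monom (of_int (v j)) (k + j)) mod (monom 1 n - 1)"
    unfolding rotation_def Pm_def k_def by (simp add: sum_distrib_left mult_monom)
  also have "\<dots> = (\<Sum>j<n. monom (of_int (v j)) ((k + j) mod n))"
    by (simp add: mod_sum_poly monom_mod assms(1))
  finally have "poly (rotation n r (Pm n v)) z = (\<Sum>j<n. of_int (v j) * z ^ ((k + j) mod n))"
    by (simp add: poly_sum poly_monom)
  also have "\<dots> = (\<Sum>j\<in>Sn n. of_int (v j) * z ^ ((k + j) mod n))"
    using assms(2) Sn_sub by (intro sum.mono_neutral_right) (auto simp: Fset_def)
  finally show ?thesis unfolding k_def .
qed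

lemma card_Sn:
  assumes "n > 1"
  shows "card (Sn n) = psi n"
proof -
  have T: "totatives n = {j. j < n \<and> coprime j n}"
    using assms by (auto simp: in_totatives_iff le_less intro!: Nat.gr0I)
  have U: "{..<n} = Sn n \<union> totatives n" unfolding T Sn_def by auto
  have D: "Sn n \<inter> totatives n = {}" unfolding T Sn_def by auto
  have "n = card (Sn n) + totient n"
    using card_Un_disjoint[OF Sn_sub(2) finite_totatives D] U totient_def by (metis card_lessThan)
  then show ?thesis unfolding psi_def by simp
qed

lemma zero_in_Sn: "n > 1 \<Longrightarrow> 0 \<in> Sn n"
  by (auto simp: Sn_def)

lemma coeff_Pm: "coeff (Pm n v) i = (if i < n then of_int (v i) else 0)"
  unfolding Pm_def by (simp add: coeff_sum coeff_monom)

lemma Vset_eq: "Vset n = Pm n ` Fset (Sn n)"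
proof
  show "Vset n \<subseteq> Pm n ` Fset (Sn n)"
  proof
    fix V assume "V \<in> Vset n"
    then obtain v where V: "V = (\<Sum>j<n. monom (of_int (v j)) j)"
      and c: "\<forall>j<n. v j \<in> {0, -1, 1} \<and> (v j = 0 \<longleftrightarrow> coprime j n)"
      unfolding Vset_def by blast
    define v' where "v' j = (if j < n then v j else 0)" for j
    have "v' \<in> Fset (Sn n)" using c unfolding Fset_def Sn_def v'_def by auto
    moreover have "V = Pm n v'" unfolding V Pm_def v'_def by simp
    ultimately show "V \<in> Pm n ` Fset (Sn n)" by blast
  qed
next
  show "Pm n ` Fset (Sn n) \<subseteq> Vset n"
  proof
    fix V assume "V \<in> Pm n ` Fset (Sn n)"
    then obtain v where v: "v \<in> Fset (Sn n)" and V: "V = Pm n v" by blast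
    have "\<forall>j<n. v j \<in> {0, -1, 1} \<and> (v j = 0 \<longleftrightarrow> coprime j n)"
    proof (intro allI impI)
      fix j assume j: "j < n"
      show "v j \<in> {0, -1, 1} \<and> (v j = 0 \<longleftrightarrow> coprime j n)"
      proof (cases "coprime j n")
        case True then have "j \<notin> Sn n" by (simp add: Sn_def)
        then show ?thesis using v True unfolding Fset_def by auto
      next
        case False then have "j \<in> Sn n" using j by (simp add: Sn_def)
        then have "v j \<in> {-1,1}" using v unfolding Fset_def by blast
        then show ?thesis using False by auto
      qed
    qed
    then show "V \<in> Vset n" unfolding Vset_def V Pm_def by blast
  qed
qed

lemma inj_Pm: "inj_on (Pm n) (Fset (Sn n))"
proof (rule inj_onI)
  fix v u assume h: "v \<in> Fset (Sn n)" "u \<in> Fset (Sn n)" "Pm n v = Pm n u"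
  show "v = u"
  proof
    fix i show "v i = u i"
    proof (cases "i < n")
      case True then show ?thesis using arg_cong[OF h(3), of "\<lambda>p. coeff p i"] by (simp add: coeff_Pm)
    next
      case False then have "i \<notin> Sn n" by (simp add: Sn_def)
      then show ?thesis using h(1,2) by (simp add: Fset_def)
    qed
  qed
qed



lemma integrable_L4: "(\<lambda>\<theta>. cmod (poly p (cis \<theta>)) ^ 4) integrable_on {0..2*pi}"
  by (intro integrable_continuous_interval continuous_intros)

lemma L4_nonneg: "L4_pow4 p \<ge> 0"
  unfolding L4_pow4_def by (intro mult_nonneg_nonneg integral_nonneg integrable_L4) auto

lemma L4_sum_bound:
  assumes "n > 1"
  shows "(\<Sum>v\<in>Fset (Sn n). L4_pow4 (rotation n r (Pm n v)))
     \<le> 3 * real (psi n)^2 * card (Fset (Sn n))"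
proof -
  define F where "F = Fset (Sn n)"
  define C where "C = 3 * real (psi n)^2 * card F"
  have finF: "finite F" unfolding F_def using Fset_finite_card[OF Sn_sub(2)] by simp
  have pt: "(\<Sum>v\<in>F. cmod (poly (rotation n r (Pm n v)) (cis \<theta>)) ^ 4) \<le> C" for \<theta>
  proof -
    define w where "w j = cis \<theta> ^ ((nat ((- \<lfloor>real n * r\<rfloor>) mod int n) + j) mod n)" for j
    have "(\<Sum>v\<in>F. cmod (poly (rotation n r (Pm n v)) (cis \<theta>)) ^ 4)
        = (\<Sum>v\<in>F. cmod (\<Sum>j\<in>Sn n. of_int (v j) * w j) ^ 4)"
      unfolding F_def w_def using assms by (intro sum.cong refl) (simp add: poly_rotation)
    also have "\<dots> \<le> C"
      using moments[OF Sn_sub(2)[of n], of w] card_Sn[OF assms] unfolding C_def F_def w_def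
      by (simp add: norm_power)
    finally show ?thesis .
  qed
  have "(\<Sum>v\<in>F. L4_pow4 (rotation n r (Pm n v)))
      = (1 / (2*pi)) * integral {0..2*pi} (\<lambda>\<theta>. \<Sum>v\<in>F. cmod (poly (rotation n r (Pm n v)) (cis \<theta>)) ^ 4)"
    unfolding L4_pow4_def by (simp add: integral_sum[OF finF integrable_L4] sum_distrib_left)
  also have "\<dots> \<le> (1 / (2*pi)) * integral {0..2*pi} (\<lambda>\<theta>. C)"
    by (intro mult_left_mono integral_le integrable_sum finF integrable_L4 integrable_const_ivl pt) auto
  also have "\<dots> = C" by simp
  finally show ?thesis unfolding C_def F_def .
qed



lemma prob_bound:
  assumes n: "n > 1"
  shows "\<bar>prob_V n (\<lambda>V. L4_pow4 (rotation n r V) < 288 * (real (psi n))^2 * ln (real n)) - 1\<bar>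
     \<le> 1 / (96 * ln (real n))"
proof -
  define T where "T = 288 * (real (psi n))^2 * ln (real n)"
  define P where "P V = (L4_pow4 (rotation n r V) < T)" for V
  define F where "F = Fset (Sn n)"
  define G where "G = {v\<in>F. P (Pm n v)}"
  define B where "B = {v\<in>F. \<not> P (Pm n v)}"
  define K where "K = card F"
  have finF: "finite F" and K: "K = 2 ^ card (Sn n)"
    unfolding F_def K_def using Fset_finite_card[OF Sn_sub(2)[of n]] by auto
  have Kpos: "real K > 0" unfolding K by simp
  have psi1: "real (psi n) \<ge> 1"
  proof -
    have "Sn n \<noteq> {}" using zero_in_Sn[OF n] by blast
    then have "card (Sn n) > 0" using Sn_sub(2)[of n] by (simp add: card_gt_0_iff)
    then show ?thesis using card_Sn[OF n] by simp
  qed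
  have ln0: "ln (real n) > 0" using n by simp
  have Tpos: "T > 0" unfolding T_def using psi1 ln0 by simp
  have inj: "inj_on (Pm n) F" unfolding F_def by (rule inj_Pm)
  have cV: "card (Vset n) = K" unfolding Vset_eq K_def F_def using inj_Pm card_image by blast
  have "{V \<in> Vset n. P V} = Pm n ` G" unfolding Vset_eq G_def F_def by auto
  then have cG: "card {V \<in> Vset n. P V} = card G"
    using card_image[OF inj_on_subset[OF inj]] unfolding G_def by auto
  have GB: "card G + card B = K"
  proof -
    have "F = G \<union> B" "G \<inter> B = {}" unfolding G_def B_def by auto
    moreover have "finite G" "finite B" using finF unfolding G_def B_def by auto
    ultimately show ?thesis unfolding K_def using card_Un_disjoint by metis
  qed
  have "T * card B = (\<Sum>v\<in>B. T)" by simp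
  also have "\<dots> \<le> (\<Sum>v\<in>B. L4_pow4 (rotation n r (Pm n v)))"
    by (intro sum_mono) (auto simp: B_def P_def)
  also have "\<dots> \<le> (\<Sum>v\<in>F. L4_pow4 (rotation n r (Pm n v)))"
    using finF L4_nonneg by (intro sum_mono2) (auto simp: B_def)
  also have "\<dots> \<le> 3 * real (psi n)^2 * K"
    using L4_sum_bound[OF n, of r] unfolding F_def K_def .
  finally have TB: "T * card B \<le> 3 * real (psi n)^2 * K" .
  have eq: "prob_V n P - 1 = - (real (card B) / K)"
  proof -
    have g: "real (card G) = real K - real (card B)" using GB by linarith
    show ?thesis unfolding prob_V_def cG cV g using Kpos by (simp add: field_simps)
  qed
  have "real (card B) / K \<le> 3 * real (psi n)^2 / T"
    using TB Kpos Tpos by (simp add: field_simps)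
  also have "\<dots> = 1 / (96 * ln (real n))"
    unfolding T_def using psi1 ln0 by (simp add: field_simps)
  finally have fb: "real (card B) / K \<le> 1 / (96 * ln (real n))" .
  have pe: "(\<lambda>V. L4_pow4 (rotation n r V) < 288 * (real (psi n))^2 * ln (real n)) = P"
    unfolding P_def T_def by simp
  have "0 \<le> real (card B) / K" by simp
  then show ?thesis unfolding pe eq using fb by simp
qed

theorem lemma15:
  fixes r :: real
  shows "\<forall>\<epsilon>>0. \<exists>N. \<forall>n::nat. n \<ge> N \<and> odd n \<and> squarefree n \<and> n > 1 \<longrightarrow>
           \<bar>prob_V n (\<lambda>V. L4_pow4 (rotation n r V) < 288 * (real (psi n))^2 * ln (real n)) - 1\<bar> < \<epsilon>"
proof (intro allI impI)
  fix \<epsilon> :: real assume e: "\<epsilon> > 0"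
  show "\<exists>N. \<forall>n::nat. n \<ge> N \<and> odd n \<and> squarefree n \<and> n > 1 \<longrightarrow>
           \<bar>prob_V n (\<lambda>V. L4_pow4 (rotation n r V) < 288 * (real (psi n))^2 * ln (real n)) - 1\<bar> < \<epsilon>"
  proof (intro exI allI impI)
    fix n :: nat assume h: "nat \<lceil>exp (1/\<epsilon>)\<rceil> + 2 \<le> n \<and> odd n \<and> squarefree n \<and> n > 1"
    have "exp (1/\<epsilon>) \<le> real (nat \<lceil>exp (1/\<epsilon>)\<rceil>)" by (rule real_nat_ceiling_ge)
    moreover have "real (nat \<lceil>exp (1/\<epsilon>)\<rceil>) + 2 \<le> real n" using h by linarith
    ultimately have "exp (1/\<epsilon>) < real n" by linarith
    then have "ln (exp (1/\<epsilon>)) < ln (real n)" using h by (subst ln_less_cancel_iff) auto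
    then have "1/\<epsilon> < ln (real n)" by simp
    then have l: "1 < \<epsilon> * ln (real n)" using e by (simp add: field_simps)
    have ln0: "ln (real n) > 0" using h by simp
    have "1 / (96 * ln (real n)) < \<epsilon>" using l ln0 by (simp add: field_simps)
    then show "\<bar>prob_V n (\<lambda>V. L4_pow4 (rotation n r V) < 288 * (real (psi n))^2 * ln (real n)) - 1\<bar> < \<epsilon>"
      using prob_bound[of n r] h by linarith
  qed
qed


end
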